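(* Let $M=(S,\mathrm{Act},P)$ be an MDP, $T\subseteq S$, $\mathrm{opt}\in\{\min,\max\}$, and let $r_1,r_2\in\mathbb{N}_\infty^S$ with $r_1\le r_2$ (pointwise). Then $\tilde D^{\mathrm{opt}}(r_1)\le\tilde D^{\mathrm{opt}}(r_2)$.
   Context: An MDP is a tuple $M=(S,\mathrm{Act},P)$ with $S$ finite, $\mathrm{Act}$ finite, $P\colon S\times\mathrm{Act}\times S\to[0,1]$ with $\sum_{s'}P(s,a,s')\in\{0,1\}$; $\mathrm{Act}(s)=\{a\mid\sum_{s'}P(s,a,s')=1\}$ is nonempty for all $s$; $\mathrm{Post}(s,a)=\{s'\mid P(s,a,s')>0\}$. $\mathbb{N}_\infty=\mathbb{N}\cup\{\infty\}$ with $\infty+1=\infty$. The complementary distance operator $\tilde D^{\mathrm{opt}}\colon\mathbb{N}_\infty^S\to\mathbb{N}_\infty^S$ is $\tilde D^{\mathrm{opt}}(r)(s)=\infty$ for $s\in T$ and $\mathrm{opt}_{a\in\mathrm{Act}(s)}\big(\min_{s'\in\mathrm{Post}(s,a)}r(s')+[\exists u,v\in\mathrm{Post}(s,a)\colon r(u)\ne r(v)]\big)$ for $s\notin T$, where $[\varphi]$ is $1$ if $\varphi$ holds and $0$ otherwise. *)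

theory Defs
  imports Main "HOL-Library.Extended_Nat"
begin

definition is_mdp :: "('s \<Rightarrow> 'a \<Rightarrow> 's \<Rightarrow> real) \<Rightarrow> bool" where
  "is_mdp P \<longleftrightarrow> finite (UNIV :: 's set) \<and> finite (UNIV :: 'a set)
     \<and> (\<forall>s a s'. 0 \<le> P s a s' \<and> P s a s' \<le> 1)
     \<and> (\<forall>s a. (\<Sum>s'\<in>UNIV. P s a s') \<in> {0, 1})
     \<and> (\<forall>s. \<exists>a. (\<Sum>s'\<in>UNIV. P s a s') = 1)"

definition Act :: "('s \<Rightarrow> 'a \<Rightarrow> 's \<Rightarrow> real) \<Rightarrow> 's \<Rightarrow> 'a set" where
  "Act P s = {a. (\<Sum>s'\<in>UNIV. P s a s') = 1}"

definition Post :: "('s \<Rightarrow> 'a \<Rightarrow> 's \<Rightarrow> real) \<Rightarrow> 's \<Rightarrow> 'a \<Rightarrow> 's set" where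
  "Post P s a = {s'. P s a s' > 0}"

datatype opt = OMin | OMax

definition opt_over :: "opt \<Rightarrow> enat set \<Rightarrow> enat" where
  "opt_over o' A = (case o' of OMin \<Rightarrow> Min A | OMax \<Rightarrow> Max A)"

definition Dtilde :: "('s \<Rightarrow> 'a \<Rightarrow> 's \<Rightarrow> real) \<Rightarrow> 's set \<Rightarrow> opt
    \<Rightarrow> ('s \<Rightarrow> enat) \<Rightarrow> ('s \<Rightarrow> enat)" where
  "Dtilde P T o' r s =
     (if s \<in> T then \<infinity>
      else opt_over o' ((\<lambda>a. Min (r ` Post P s a)
              + (if \<exists>u\<in>Post P s a. \<exists>v\<in>Post P s a. r u \<noteq> r v then 1 else 0))
            ` Act P s))"

end

theory Submission
  imports Defs
begin

lemma min_mono: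
  fixes f g :: "'b \<Rightarrow> 'c::linorder"
  assumes fin: "finite A" and ne: "A \<noteq> {}" and le: "\<And>x. x \<in> A \<Longrightarrow> f x \<le> g x"
  shows "Min (f ` A) \<le> Min (g ` A)"
proof (rule Min.boundedI)
  show "finite (g ` A)" using fin by simp
  show "g ` A \<noteq> {}" using ne by simp
  fix y assume "y \<in> g ` A"
  then obtain x where x: "x \<in> A" "y = g x" by blast
  have "Min (f ` A) \<le> f x" using fin x(1) by simp
  also have "\<dots> \<le> y" using le[OF x(1)] x(2) by simp
  finally show "Min (f ` A) \<le> y" .
qed

lemma max_mono:
  fixes f g :: "'b \<Rightarrow> 'c::linorder"
  assumes fin: "finite A" and ne: "A \<noteq> {}" and le: "\<And>x. x \<in> A \<Longrightarrow> f x \<le> g x"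
  shows "Max (f ` A) \<le> Max (g ` A)"
proof (rule Max.boundedI)
  show "finite (f ` A)" using fin by simp
  show "f ` A \<noteq> {}" using ne by simp
  fix y assume "y \<in> f ` A"
  then obtain x where x: "x \<in> A" "y = f x" by blast
  have "y \<le> g x" using le[OF x(1)] x(2) by simp
  also have "\<dots> \<le> Max (g ` A)" using fin x(1) by simp
  finally show "y \<le> Max (g ` A)" .
qed

lemma key:
  fixes f g :: "'s \<Rightarrow> enat"
  assumes fin: "finite A" and ne: "A \<noteq> {}" and le: "\<And>x. x \<in> A \<Longrightarrow> f x \<le> g x"
  shows "Min (f ` A) + (if \<exists>u\<in>A. \<exists>v\<in>A. f u \<noteq> f v then 1 else 0)
       \<le> Min (g ` A) + (if \<exists>u\<in>A. \<exists>v\<in>A. g u \<noteq> g v then 1 else 0)"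
proof -
  have mm: "Min (f ` A) \<le> Min (g ` A)" by (rule min_mono[OF fin ne le])
  show ?thesis
  proof (cases "\<exists>u\<in>A. \<exists>v\<in>A. g u \<noteq> g v")
    case True
    have "(if \<exists>u\<in>A. \<exists>v\<in>A. f u \<noteq> f v then 1 else 0) \<le> (1::enat)" by simp
    from add_mono[OF mm this] show ?thesis using True by (simp only: if_True)
  next
    case False
    show ?thesis
    proof (cases "\<exists>u\<in>A. \<exists>v\<in>A. f u \<noteq> f v")
      case False2: False
      from mm show ?thesis by (simp only: False False2 if_False add_0_right)
    next
      case True
      then obtain u v where uv0: "u \<in> A" "v \<in> A" "f u \<noteq> f v"
        by blast
      obtain u' v' where uv: "u' \<in> A" "v' \<in> A" "f u' < f v'"
      proof (cases "f u < f v")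
        case True
        then show ?thesis using that uv0 by blast
      next
        case False
        then have "f v < f u" using uv0(3) by (simp add: not_less order.order_iff_strict)
        then show ?thesis using that uv0 by blast
      qed
      have gc: "g x = g v'" if "x \<in> A" for x using False uv(2) that by blast
      have "Min (g ` A) \<in> g ` A" using fin ne by simp
      then obtain x where "x \<in> A" "Min (g ` A) = g x" by blast
      then have gm: "Min (g ` A) = g v'" using gc by simp
      have "Min (f ` A) \<le> f u'" using fin uv(1) by simp
      also have "\<dots> < f v'" by (rule uv(3))
      also have "\<dots> \<le> g v'" by (rule le[OF uv(2)])
      finally have lt: "Min (f ` A) < g v'" .
      have "Min (f ` A) + 1 \<le> g v'" using ileI1[OF lt] by (simp only: eSuc_plus_1)
      then show ?thesis by (simp only: True False gm if_True if_False add_0_right)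
    qed
  qed
qed

lemma opt_mono:
  fixes f g :: "'a \<Rightarrow> enat"
  assumes fin: "finite A" and ne: "A \<noteq> {}" and le: "\<And>x. x \<in> A \<Longrightarrow> f x \<le> g x"
  shows "opt_over o' (f ` A) \<le> opt_over o' (g ` A)"
  using min_mono[OF fin ne le] max_mono[OF fin ne le] unfolding opt_over_def
  by (cases o') simp_all

theorem lemma8:
  fixes P :: "'s \<Rightarrow> 'a \<Rightarrow> 's \<Rightarrow> real" and T :: "'s set" and o' :: opt
    and r1 r2 :: "'s \<Rightarrow> enat"
  assumes "is_mdp P"
    and "\<forall>s. r1 s \<le> r2 s"
  shows "\<forall>s. Dtilde P T o' r1 s \<le> Dtilde P T o' r2 s"
proof
  fix s
  have fS: "finite (UNIV :: 's set)" and fA: "finite (UNIV :: 'a set)"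
    and ex: "\<exists>a. (\<Sum>s'\<in>UNIV. P s a s') = 1" using assms(1) unfolding is_mdp_def by blast+
  have postne: "Post P s a \<noteq> {}" if "a \<in> Act P s" for a
  proof
    assume "Post P s a = {}"
    then have "\<forall>s'. P s a s' \<le> 0" unfolding Post_def by (metis (mono_tags) empty_iff mem_Collect_eq not_le)
    then have "(\<Sum>s'\<in>UNIV. P s a s') \<le> 0" by (meson sum_nonpos)
    with that show False unfolding Act_def by simp
  qed
  have ne: "Act P s \<noteq> {}" using ex unfolding Act_def by auto
  have fin: "finite (Act P s)" using fA by (rule finite_subset[rotated]) simp
  have "opt_over o' ((\<lambda>a. Min (r1 ` Post P s a)
              + (if \<exists>u\<in>Post P s a. \<exists>v\<in>Post P s a. r1 u \<noteq> r1 v then 1 else 0)) ` Act P s)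
     \<le> opt_over o' ((\<lambda>a. Min (r2 ` Post P s a)
              + (if \<exists>u\<in>Post P s a. \<exists>v\<in>Post P s a. r2 u \<noteq> r2 v then 1 else 0)) ` Act P s)"
  proof (rule opt_mono[OF fin ne])
    fix a assume a: "a \<in> Act P s"
    show "Min (r1 ` Post P s a)
              + (if \<exists>u\<in>Post P s a. \<exists>v\<in>Post P s a. r1 u \<noteq> r1 v then 1 else 0)
       \<le> Min (r2 ` Post P s a)
              + (if \<exists>u\<in>Post P s a. \<exists>v\<in>Post P s a. r2 u \<noteq> r2 v then 1 else 0)"
      by (rule key[OF finite_subset[OF subset_UNIV fS] postne[OF a]]) (use assms(2) in blast)
  qed
  then show "Dtilde P T o' r1 s \<le> Dtilde P T o' r2 s"
    unfolding Dtilde_def by (cases "s \<in> T") simp_all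
qed

end
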